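(* Let $\sigma>0$, $\rho_1>0$ and let $L\ge1$ be an integer. Then, entrywise, $$\mathbf M_1^{L}\,\vec W_{\rho_1}=\int_{\mathbb R}(x+\sigma)^L\,\vec U(x)\,\mu_{\rho_1}(dx);$$ equivalently, for every $m\ge0$, $$\sum_{n=0}^\infty\rho_1^n\sum_{\vec\gamma\in\mathcal M^{(L)}_{m,n}}w(\vec\gamma)=\int_{\mathbb R}(x+\sigma)^Lu_m(x)\,\mu_{\rho_1}(dx).$$
   Context: $\mathbf M_1$ is the infinite tridiagonal matrix indexed by $\mathbb Z_{\ge0}\times\mathbb Z_{\ge0}$ with entries $(\mathbf M_1)_{n,n}=\sigma$, $(\mathbf M_1)_{n,n+1}=(\mathbf M_1)_{n+1,n}=1$ and all other entries $0$. $\vec W_{\rho_1}=(1,\rho_1,\rho_1^2,\dots)^T$ and $\vec U(x)=(u_0(x),u_1(x),\dots)^T$, where $u_n$ are the monic Chebyshev polynomials of the second kind: $u_{-1}=0$, $u_0=1$, $xu_n=u_{n+1}+u_{n-1}$. A Motzkin path of length $L$ is a sequence $(\gamma_0,\dots,\gamma_L)$ of non-negative integers with $|\gamma_k-\gamma_{k-1}|\le1$; $\mathcal M^{(L)}_{m,n}$ is the set of those with $\gamma_0=m,\gamma_L=n$; $w(\vec\gamma)=\sigma^{\#\{k:\gamma_k=\gamma_{k-1}\}}$. For $\rho>0$, $\mu_\rho$ is the probability measure $$\mu_\rho(dx)=\frac{1}{2\pi}\frac{\sqrt{4-x^2}}{1-\rho x+\rho^2}\mathbf 1_{\{|x|<2\}}dx+\Big(1-\frac{1}{\rho^2}\Big)_+\delta_{\rho+1/\rho}(dx),$$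 with $t_+=\max\{t,0\}$. *)

theory Defs
  imports "HOL-Analysis.Analysis"
begin

fun cheb_u :: "nat \<Rightarrow> real \<Rightarrow> real" where
  "cheb_u 0 x = 1"
| "cheb_u (Suc 0) x = x"
| "cheb_u (Suc (Suc n)) x = x * cheb_u (Suc n) x - cheb_u n x"

definition motzkin_paths :: "nat \<Rightarrow> nat \<Rightarrow> nat \<Rightarrow> nat list set" where
  "motzkin_paths L m n = {\<gamma>. length \<gamma> = Suc L \<and> \<gamma> ! 0 = m \<and> \<gamma> ! L = n \<and>
      (\<forall>k\<in>{1..L}. \<bar>int (\<gamma> ! k) - int (\<gamma> ! (k - 1))\<bar> \<le> 1)}"

definition motzkin_weight :: "real \<Rightarrow> nat list \<Rightarrow> real" where
  "motzkin_weight \<sigma> \<gamma> = \<sigma> ^ card {k\<in>{1..length \<gamma> - 1}. \<gamma> ! k = \<gamma> ! (k - 1)}"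

definition mu_density :: "real \<Rightarrow> real \<Rightarrow> real" where
  "mu_density \<rho> x = indicator {-2<..<2} x * sqrt (4 - x\<^sup>2) / (2 * pi * (1 - \<rho> * x + \<rho>\<^sup>2))"

definition mu :: "real \<Rightarrow> real measure" where
  "mu \<rho> = measure_of UNIV (sets borel)
     (\<lambda>A. emeasure (density lborel (\<lambda>x. ennreal (mu_density \<rho> x))) A
          + ennreal (max 0 (1 - 1 / \<rho>\<^sup>2)) * indicator A (\<rho> + 1 / \<rho>))"

end

theory Submission
  imports Defs
begin


definition Dm :: "real \<Rightarrow> real measure" where
  "Dm \<rho> = density lborel (\<lambda>x. ennreal (mu_density \<rho> x))"

lemma sets_Dm[simp, measurable_cong]: "sets (Dm \<rho>) = sets borel"
  by (simp add: Dm_def)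

lemma space_Dm[simp]: "space (Dm \<rho>) = UNIV"
  by (simp add: Dm_def)

lemma sets_mu[simp, measurable_cong]: "sets (mu \<rho>) = sets borel"
  unfolding mu_def using sets.sigma_sets_eq[of borel] by (subst sets_measure_of) auto

lemma space_mu[simp]: "space (mu \<rho>) = UNIV"
  using sets_eq_imp_space_eq[OF sets_mu[of \<rho>]] by simp

lemma emeasure_mu:
  assumes "A \<in> sets borel"
  shows "emeasure (mu \<rho>) A = emeasure (Dm \<rho>) A
          + ennreal (max 0 (1 - 1 / \<rho>\<^sup>2)) * indicator A (\<rho> + 1 / \<rho>)"
  unfolding mu_def Dm_def[symmetric]
proof (rule emeasure_measure_of_sigma[OF _ _ _ assms])
  show "sigma_algebra UNIV (sets borel)"
    using sets.sigma_algebra_axioms[of borel] by simp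
  show "positive (sets borel) (\<lambda>A. emeasure (Dm \<rho>) A + ennreal (max 0 (1 - 1 / \<rho>\<^sup>2)) * indicator A (\<rho> + 1 / \<rho>))"
    by (simp add: positive_def)
  show "countably_additive (sets borel) (\<lambda>A. emeasure (Dm \<rho>) A + ennreal (max 0 (1 - 1 / \<rho>\<^sup>2)) * indicator A (\<rho> + 1 / \<rho>))"
    unfolding countably_additive_def
  proof (intro allI impI)
    fix B :: "nat \<Rightarrow> real set"
    assume B: "range B \<subseteq> sets borel" "disjoint_family B" "\<Union> (range B) \<in> sets borel"
    have "(\<Sum>i. emeasure (Dm \<rho>) (B i) + ennreal (max 0 (1 - 1 / \<rho>\<^sup>2)) * indicator (B i) (\<rho> + 1 / \<rho>))
       = (\<Sum>i. emeasure (Dm \<rho>) (B i)) + (\<Sum>i. ennreal (max 0 (1 - 1 / \<rho>\<^sup>2)) * indicator (B i) (\<rho> + 1 / \<rho>))"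
      by (rule suminf_add[symmetric]) auto
    also have "(\<Sum>i. emeasure (Dm \<rho>) (B i)) = emeasure (Dm \<rho>) (\<Union> (range B))"
      using B by (intro suminf_emeasure) auto
    also have "(\<Sum>i. ennreal (max 0 (1 - 1 / \<rho>\<^sup>2)) * indicator (B i) (\<rho> + 1 / \<rho>))
       = ennreal (max 0 (1 - 1 / \<rho>\<^sup>2)) * (\<Sum>i. indicator (B i) (\<rho> + 1 / \<rho>))"
      by (rule ennreal_suminf_cmult)
    also have "(\<Sum>i. indicator (B i) (\<rho> + 1 / \<rho>) :: ennreal) = indicator (\<Union> (range B)) (\<rho> + 1 / \<rho>)"
      using B by (intro suminf_indicator) auto
    finally show "(\<Sum>i. emeasure (Dm \<rho>) (B i) + ennreal (max 0 (1 - 1 / \<rho>\<^sup>2)) * indicator (B i) (\<rho> + 1 / \<rho>)) =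
         emeasure (Dm \<rho>) (\<Union> (range B)) + ennreal (max 0 (1 - 1 / \<rho>\<^sup>2)) * indicator (\<Union> (range B)) (\<rho> + 1 / \<rho>)" .
  qed
qed

lemma nn_integral_mu:
  fixes g :: "real \<Rightarrow> ennreal"
  assumes "g \<in> borel_measurable borel"
  shows "(\<integral>\<^sup>+x. g x \<partial>mu \<rho>) = (\<integral>\<^sup>+x. g x \<partial>Dm \<rho>) + ennreal (max 0 (1 - 1 / \<rho>\<^sup>2)) * g (\<rho> + 1 / \<rho>)"
  (is "?P g")
proof -
  have gm: "g \<in> borel_measurable (mu \<rho>)" using assms by simp
  show ?thesis
  using gm proof (induction rule: borel_measurable_induct)
    case (cong f g)
    then have "f = g" by auto
    then show ?case using cong by simp
  next
    case (set A)
    then show ?case by (simp add: emeasure_mu)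
  next
    case (mult u c)
    have "(\<integral>\<^sup>+x. c * u x \<partial>mu \<rho>) = c * (\<integral>\<^sup>+x. u x \<partial>mu \<rho>)"
      using mult by (intro nn_integral_cmult) auto
    moreover have "(\<integral>\<^sup>+x. c * u x \<partial>Dm \<rho>) = c * (\<integral>\<^sup>+x. u x \<partial>Dm \<rho>)"
      using mult by (intro nn_integral_cmult) auto
    ultimately show ?case using mult by (simp add: distrib_left mult.assoc mult.left_commute)
  next
    case (add u v)
    have "(\<integral>\<^sup>+x. v x + u x \<partial>mu \<rho>) = (\<integral>\<^sup>+x. v x \<partial>mu \<rho>) + (\<integral>\<^sup>+x. u x \<partial>mu \<rho>)"
      using add by (intro nn_integral_add) auto
    moreover have "(\<integral>\<^sup>+x. v x + u x \<partial>Dm \<rho>) = (\<integral>\<^sup>+x. v x \<partial>Dm \<rho>) + (\<integral>\<^sup>+x. u x \<partial>Dm \<rho>)"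
      using add by (intro nn_integral_add) auto
    ultimately show ?case using add by (simp add: distrib_left algebra_simps)
  next
    case (seq U)
    have "(\<integral>\<^sup>+x. (SUP i. U i) x \<partial>mu \<rho>) = (SUP i. \<integral>\<^sup>+x. U i x \<partial>mu \<rho>)"
      unfolding SUP_apply by (rule nn_integral_monotone_convergence_SUP) (use seq in auto)
    also have "\<dots> = (SUP i. (\<integral>\<^sup>+x. U i x \<partial>Dm \<rho>) + ennreal (max 0 (1 - 1 / \<rho>\<^sup>2)) * U i (\<rho> + 1 / \<rho>))"
      using seq by simp
    also have "\<dots> = (SUP i. \<integral>\<^sup>+x. U i x \<partial>Dm \<rho>) + (SUP i. ennreal (max 0 (1 - 1 / \<rho>\<^sup>2)) * U i (\<rho> + 1 / \<rho>))"
      using seq by (intro ennreal_SUP_add) (auto simp: incseq_def le_fun_def intro!: nn_integral_mono mult_left_mono)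
    also have "(SUP i. \<integral>\<^sup>+x. U i x \<partial>Dm \<rho>) = (\<integral>\<^sup>+x. (SUP i. U i) x \<partial>Dm \<rho>)"
      unfolding SUP_apply by (rule nn_integral_monotone_convergence_SUP[symmetric]) (use seq in auto)
    also have "(SUP i. ennreal (max 0 (1 - 1 / \<rho>\<^sup>2)) * U i (\<rho> + 1 / \<rho>)) = ennreal (max 0 (1 - 1 / \<rho>\<^sup>2)) * (SUP i. U i) (\<rho> + 1 / \<rho>)"
      by (simp add: SUP_mult_left_ennreal SUP_apply image_comp)
    finally show ?case .
  qed
qed



lemma integral_mu:
  fixes g :: "real \<Rightarrow> real"
  assumes gm: "g \<in> borel_measurable borel" and gi: "integrable (Dm \<rho>) g"
  shows "integrable (mu \<rho>) g"
    and "integral\<^sup>L (mu \<rho>) g = integral\<^sup>L (Dm \<rho>) g + max 0 (1 - 1 / \<rho>\<^sup>2) * g (\<rho> + 1 / \<rho>)"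
proof -
  define c where "c = max 0 (1 - 1 / \<rho>\<^sup>2)"
  have c0: "c \<ge> 0" by (simp add: c_def)
  obtain r q where rq: "0 \<le> r" "0 \<le> q"
    "(\<integral>\<^sup>+x. ennreal (g x)\<partial>Dm \<rho>) = ennreal r"
    "(\<integral>\<^sup>+x. ennreal (-g x)\<partial>Dm \<rho>) = ennreal q"
    "integral\<^sup>L (Dm \<rho>) g = r - q"
    using integrableE[OF gi] by metis
  have mx: "ennreal y = ennreal (max 0 y)" for y :: real
    by (cases "y \<ge> 0") (auto simp: ennreal_neg)
  have e: "ennreal (a + b*m) = ennreal a + ennreal b * ennreal m" if "a\<ge>0" "b\<ge>0" "m\<ge>0" for a b m :: real
    using that by (simp add: ennreal_plus ennreal_mult)
  have gm': "(\<lambda>x. ennreal (g x)) \<in> borel_measurable borel" "(\<lambda>x. ennreal (- g x)) \<in> borel_measurable borel"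
    using gm by auto
  have p: "(\<integral>\<^sup>+x. ennreal (g x)\<partial>mu \<rho>) = ennreal (r + c * max 0 (g (\<rho> + 1 / \<rho>)))"
    apply (subst nn_integral_mu[OF gm'(1)])
    apply (subst e)
    using rq c0 by (auto simp: c_def[symmetric] mx[of "g (\<rho> + 1 / \<rho>)"])
  have n: "(\<integral>\<^sup>+x. ennreal (- g x)\<partial>mu \<rho>) = ennreal (q + c * max 0 (- g (\<rho> + 1 / \<rho>)))"
    apply (subst nn_integral_mu[OF gm'(2)])
    apply (subst e)
    using rq c0 by (auto simp: c_def[symmetric] mx[of "- g (\<rho> + 1 / \<rho>)"])
  show i: "integrable (mu \<rho>) g"
    unfolding real_integrable_def using p n gm by simp
  show "integral\<^sup>L (mu \<rho>) g = integral\<^sup>L (Dm \<rho>) g + max 0 (1 - 1 / \<rho>\<^sup>2) * g (\<rho> + 1 / \<rho>)"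
  proof -
    have "integral\<^sup>L (mu \<rho>) g = (r + c * max 0 (g (\<rho> + 1 / \<rho>))) - (q + c * max 0 (- g (\<rho> + 1 / \<rho>)))"
      unfolding real_lebesgue_integral_def[OF i] p n using rq c0
      by (subst enn2real_ennreal, simp)+ simp
    also have "\<dots> = (r - q) + c * (max 0 (g (\<rho> + 1 / \<rho>)) - max 0 (- g (\<rho> + 1 / \<rho>)))"
      by (simp add: algebra_simps)
    also have "max 0 (g (\<rho> + 1 / \<rho>)) - max 0 (- g (\<rho> + 1 / \<rho>)) = g (\<rho> + 1 / \<rho>)" by auto
    finally show ?thesis using rq unfolding c_def[symmetric] by simp
  qed
qed



definition Sn :: "nat \<Rightarrow> nat set" where
  "Sn m = {m'. m' \<le> m + 1 \<and> m \<le> m' + 1}"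

lemma finite_Sn[simp]: "finite (Sn m)"
  unfolding Sn_def by (rule finite_subset[of _ "{..m+1}"]) auto

lemma mp0: "motzkin_paths 0 m n = (if m = n then {[m]} else {})"
  unfolding motzkin_paths_def by (auto simp: length_Suc_conv)

lemma mp_cons_iff:
  assumes "length g = Suc L"
  shows "(m # g \<in> motzkin_paths (Suc L) m n) \<longleftrightarrow> (g ! 0 \<in> Sn m \<and> g \<in> motzkin_paths L (g ! 0) n)"
proof
  assume A: "m # g \<in> motzkin_paths (Suc L) m n"
  then have st: "\<forall>k\<in>{1..Suc L}. \<bar>int ((m#g) ! k) - int ((m#g) ! (k - 1))\<bar> \<le> 1"
    and e: "(m#g) ! Suc L = n" unfolding motzkin_paths_def by auto
  from st[rule_format, of 1] have "\<bar>int (g!0) - int m\<bar> \<le> 1" by simp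
  then have "g ! 0 \<in> Sn m" unfolding Sn_def by auto
  moreover have "\<bar>int (g ! k) - int (g ! (k - 1))\<bar> \<le> 1" if k: "k \<in> {1..L}" for k
  proof -
    from st[rule_format, of "Suc k"] k have "\<bar>int ((m#g) ! Suc k) - int ((m#g) ! k)\<bar> \<le> 1" by simp
    moreover have "(m#g) ! k = g ! (k - 1)" using k by (cases k) auto
    ultimately show ?thesis by simp
  qed
  ultimately show "g ! 0 \<in> Sn m \<and> g \<in> motzkin_paths L (g ! 0) n"
    using assms e unfolding motzkin_paths_def by auto
next
  assume B: "g ! 0 \<in> Sn m \<and> g \<in> motzkin_paths L (g ! 0) n"
  then have st: "\<forall>k\<in>{1..L}. \<bar>int (g ! k) - int (g ! (k - 1))\<bar> \<le> 1" and e: "g ! L = n"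
    unfolding motzkin_paths_def by auto
  have "\<bar>int ((m#g) ! k) - int ((m#g) ! (k - 1))\<bar> \<le> 1" if k: "k \<in> {1..Suc L}" for k
  proof (cases "k = 1")
    case True
    then show ?thesis using B unfolding Sn_def by auto
  next
    case False
    then obtain j where j: "k = Suc j" "j \<in> {1..L}" using k by (cases k) auto
    then have "(m#g) ! (k - 1) = g ! (j - 1)" by (cases j) auto
    then show ?thesis using st j by auto
  qed
  then show "m # g \<in> motzkin_paths (Suc L) m n"
    using assms e unfolding motzkin_paths_def by auto
qed

lemma mpS: "motzkin_paths (Suc L) m n = (\<Union>m'\<in>Sn m. (\<lambda>g. m # g) ` motzkin_paths L m' n)"
proof (intro set_eqI iffI)
  fix x assume x: "x \<in> motzkin_paths (Suc L) m n"
  then have "length x = Suc (Suc L)" "x ! 0 = m" unfolding motzkin_paths_def by auto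
  then obtain g where g: "x = m # g" "length g = Suc L" by (cases x) auto
  with x mp_cons_iff[of g L m n] show "x \<in> (\<Union>m'\<in>Sn m. (\<lambda>g. m # g) ` motzkin_paths L m' n)"
    by auto
next
  fix x assume "x \<in> (\<Union>m'\<in>Sn m. (\<lambda>g. m # g) ` motzkin_paths L m' n)"
  then obtain m' g where g: "m' \<in> Sn m" "g \<in> motzkin_paths L m' n" "x = m # g" by auto
  then have "length g = Suc L" "g ! 0 = m'" unfolding motzkin_paths_def by auto
  with g mp_cons_iff[of g L m n] show "x \<in> motzkin_paths (Suc L) m n" by auto
qed

lemma finite_mp: "finite (motzkin_paths L m n)"
proof (induction L arbitrary: m)
  case 0 then show ?case by (simp add: mp0)
next
  case (Suc L) then show ?case by (simp add: mpS)
qed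

lemma weight_cons:
  assumes "length g = Suc L"
  shows "motzkin_weight \<sigma> (m # g) = (if g ! 0 = m then \<sigma> else 1) * motzkin_weight \<sigma> g"
proof -
  have eq: "{k\<in>{1..length (m#g) - 1}. (m#g) ! k = (m#g) ! (k - 1)}
      = (if g ! 0 = m then {1} else {}) \<union> Suc ` {k\<in>{1..length g - 1}. g ! k = g ! (k - 1)}"
  proof (intro set_eqI iffI)
    fix k assume k: "k \<in> {k\<in>{1..length (m#g) - 1}. (m#g) ! k = (m#g) ! (k - 1)}"
    show "k \<in> (if g ! 0 = m then {1} else {}) \<union> Suc ` {k\<in>{1..length g - 1}. g ! k = g ! (k - 1)}"
    proof (cases "k = 1")
      case True then show ?thesis using k by auto
    next
      case False
      then obtain j where j: "k = Suc j" "j \<ge> 1" using k by (cases k) auto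
      then have "(m#g) ! (k - 1) = g ! (j - 1)" by (cases j) auto
      then show ?thesis using k j assms by (auto intro!: imageI)
    qed
  next
    fix k assume k: "k \<in> (if g ! 0 = m then {1} else {}) \<union> Suc ` {k\<in>{1..length g - 1}. g ! k = g ! (k - 1)}"
    show "k \<in> {k\<in>{1..length (m#g) - 1}. (m#g) ! k = (m#g) ! (k - 1)}"
    proof (cases "k = 1")
      case True then show ?thesis using k assms by (auto split: if_splits)
    next
      case False
      then obtain j where j: "k = Suc j" "j \<in> {k\<in>{1..length g - 1}. g ! k = g ! (k - 1)}"
        using k by (auto split: if_splits)
      then have "(m#g) ! (k - 1) = g ! (j - 1)" by (cases j) auto
      then show ?thesis using j by auto
    qed
  qed
  have card: "card ((if g ! 0 = m then {1} else {}) \<union> Suc ` {k\<in>{1..length g - 1}. g ! k = g ! (k - 1)})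
     = (if g ! 0 = m then 1 else 0) + card {k\<in>{1..length g - 1}. g ! k = g ! (k - 1)}"
    by (subst card_Un_disjoint) (auto simp: card_image)
  show ?thesis unfolding motzkin_weight_def eq card by (auto simp: power_add)
qed

definition P :: "real \<Rightarrow> nat \<Rightarrow> nat \<Rightarrow> nat \<Rightarrow> real" where
  "P \<sigma> L m n = (\<Sum>g\<in>motzkin_paths L m n. motzkin_weight \<sigma> g)"

lemma weight1: "motzkin_weight \<sigma> [x] = 1"
proof -
  have "{k\<in>{1..length [x] - 1}. [x] ! k = [x] ! (k - 1)} = {}" by simp
  then show ?thesis unfolding motzkin_weight_def by (simp only:) simp
qed

lemma P0: "P \<sigma> 0 m n = (if m = n then 1 else 0)"
  by (simp add: P_def mp0 weight1)

lemma PS: "P \<sigma> (Suc L) m n = (\<Sum>m'\<in>Sn m. (if m' = m then \<sigma> else 1) * P \<sigma> L m' n)"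
proof -
  have "P \<sigma> (Suc L) m n = (\<Sum>m'\<in>Sn m. \<Sum>g\<in>(\<lambda>g. m # g) ` motzkin_paths L m' n. motzkin_weight \<sigma> g)"
    unfolding P_def mpS
    apply (rule sum.UNION_disjoint)
      apply simp
     apply (simp add: finite_mp)
    apply (auto simp: motzkin_paths_def)
    done
  also have "\<dots> = (\<Sum>m'\<in>Sn m. \<Sum>g\<in>motzkin_paths L m' n. motzkin_weight \<sigma> (m # g))"
    by (rule sum.cong[OF refl]) (simp add: sum.reindex inj_on_def)
  also have "\<dots> = (\<Sum>m'\<in>Sn m. \<Sum>g\<in>motzkin_paths L m' n. (if m' = m then \<sigma> else 1) * motzkin_weight \<sigma> g)"
    by (intro sum.cong refl, subst weight_cons) (auto simp: motzkin_paths_def)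
  finally show ?thesis by (simp add: P_def sum_distrib_left)
qed

lemma P_vanish: "n > m + L \<Longrightarrow> P \<sigma> L m n = 0"
proof (induction L arbitrary: m)
  case 0 then show ?case by (simp add: P0)
next
  case (Suc L)
  show ?case unfolding PS
    by (rule sum.neutral) (use Suc in \<open>auto simp: Sn_def\<close>)
qed

lemma Sn_sum:
  fixes f :: "nat \<Rightarrow> real"
  shows "(\<Sum>m'\<in>Sn m. (if m' = m then \<sigma> else 1) * f m') = \<sigma> * f m + f (m + 1) + (if m = 0 then 0 else f (m - 1))"
proof (cases m)
  case 0
  then have "Sn m = {0, 1}" by (auto simp: Sn_def)
  then show ?thesis using 0 by simp
next
  case (Suc k)
  then have "Sn m = {k, Suc k, Suc (Suc k)}" by (auto simp: Sn_def)
  then show ?thesis using Suc by simp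
qed



lemma cheb_rec: "x * cheb_u m x = cheb_u (m + 1) x + (if m = 0 then 0 else cheb_u (m - 1) x)"
  by (cases m) auto

lemma cheb_sin: "cheb_u n (2 * cos t) * sin t = sin ((real n + 1) * t)"
proof -
  have "cheb_u n (2 * cos t) * sin t = sin ((real n + 1) * t) \<and>
        cheb_u (Suc n) (2 * cos t) * sin t = sin ((real n + 2) * t)"
  proof (induction n)
    case 0
    have "sin (2 * t) = 2 * sin t * cos t" by (rule sin_double)
    then show ?case by (simp add: algebra_simps)
  next
    case (Suc n)
    have "cheb_u (Suc (Suc n)) (2 * cos t) * sin t
        = 2 * cos t * (cheb_u (Suc n) (2 * cos t) * sin t) - cheb_u n (2 * cos t) * sin t"
      by (simp add: algebra_simps)
    also have "\<dots> = 2 * cos t * sin ((real n + 2) * t) - sin ((real n + 1) * t)"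
      using Suc by simp
    also have "sin ((real n + 1) * t) = sin ((real n + 2) * t - t)" by (simp add: algebra_simps)
    also have "2 * cos t * sin ((real n + 2) * t) - sin ((real n + 2) * t - t) = sin ((real n + 2) * t + t)"
    proof -
      have "2 * cos t * sin a - sin (a - t) = sin (a + t)" for a
        by (simp add: sin_add sin_diff algebra_simps)
      then show ?thesis .
    qed
    also have "(real n + 2) * t + t = (real (Suc n) + 2) * t" by (simp add: algebra_simps)
    finally show ?case using Suc by (simp add: algebra_simps)
  qed
  then show ?thesis by simp
qed

lemma cheb_ge: "y \<ge> 2 \<Longrightarrow> cheb_u n y \<ge> real n + 1 \<and> cheb_u (Suc n) y - cheb_u n y \<ge> 1"
proof (induction n)
  case 0 then show ?case by simp
next
  case (Suc n)
  note IH = Suc.IH[OF Suc.prems]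
  have a: "cheb_u (Suc n) y \<ge> real n + 2" using IH by linarith
  have b: "(y - 2) * cheb_u (Suc n) y \<ge> 0" using a Suc.prems by simp
  have c: "cheb_u (Suc (Suc n)) y = (y - 2) * cheb_u (Suc n) y + 2 * cheb_u (Suc n) y - cheb_u n y"
    by (simp add: algebra_simps)
  show ?case
  proof
    show "real (Suc n) + 1 \<le> cheb_u (Suc n) y" using a by simp
    show "1 \<le> cheb_u (Suc (Suc n)) y - cheb_u (Suc n) y" unfolding c using b IH by linarith
  qed
qed

lemma cheb_rho:
  assumes r: "\<rho> > 0"
  shows "(\<rho> - 1/\<rho>) * cheb_u n (\<rho> + 1/\<rho>) = \<rho> ^ (n + 1) - (1/\<rho>) ^ (n + 1)"
proof -
  define y where "y = \<rho> + 1/\<rho>"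
  define a where "a = 1/\<rho>"
  have ra: "\<rho> * a = 1" using r by (simp add: a_def)
  have "(\<rho> - a) * cheb_u n y = \<rho> ^ (n + 1) - a ^ (n + 1) \<and> (\<rho> - a) * cheb_u (Suc n) y = \<rho> ^ (n + 2) - a ^ (n + 2)"
  proof (induction n)
    case 0
    have "(\<rho> - a) * (\<rho> + a) = \<rho>\<^sup>2 - a\<^sup>2" by (simp add: algebra_simps power2_eq_square)
    then show ?case by (simp add: y_def a_def[symmetric] power2_eq_square)
  next
    case (Suc n)
    have "(\<rho> - a) * cheb_u (Suc (Suc n)) y = y * ((\<rho> - a) * cheb_u (Suc n) y) - (\<rho> - a) * cheb_u n y"
      by (simp add: algebra_simps)
    also have "\<dots> = (\<rho> + a) * (\<rho> ^ (n + 2) - a ^ (n + 2)) - (\<rho> ^ (n + 1) - a ^ (n + 1))"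
      using Suc by (simp add: y_def a_def)
    also have "\<dots> = \<rho> ^ (n + 3) - a ^ (n + 3) + (\<rho> * a) * (\<rho> ^ (n+1) - a ^ (n + 1)) - (\<rho> ^ (n + 1) - a ^ (n + 1))"
      by (simp add: algebra_simps power_add numeral_3_eq_3 power2_eq_square)
    also have "\<dots> = \<rho> ^ (n + 3) - a ^ (n + 3)" using ra by simp
    finally show ?case using Suc by (simp add: numeral_3_eq_3)
  qed
  then show ?thesis by (simp add: y_def a_def)
qed

lemma cheb_cont[continuous_intros]: "continuous_on S (cheb_u n)"
proof -
  have "continuous_on S (cheb_u n) \<and> continuous_on S (cheb_u (Suc n))"
  proof (induction n)
    case 0 then show ?case by (auto intro!: continuous_intros)
  next
    case (Suc n)
    have "cheb_u (Suc (Suc n)) = (\<lambda>x. x * cheb_u (Suc n) x - cheb_u n x)" by (rule ext) simp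
    then show ?case using Suc by (auto intro!: continuous_intros)
  qed
  then show ?thesis by simp
qed

lemma cheb_meas[measurable]: "cheb_u n \<in> borel_measurable borel"
  by (intro borel_measurable_continuous_onI cheb_cont)

lemma subst_FTC:
  fixes \<Phi> \<phi> h :: "real \<Rightarrow> real"
  assumes cont: "continuous_on {0..pi} \<Phi>"
    and der: "\<And>t. t \<in> {0<..<pi} \<Longrightarrow> (\<Phi> has_real_derivative \<phi> t) (at t)"
    and eq: "\<And>x. x \<in> {-2<..<2} \<Longrightarrow> h x * sqrt (4 - x\<^sup>2) = - \<phi> (arccos (x / 2))"
  shows "(h has_integral (\<Phi> 0 - \<Phi> pi)) {-2..2}"
proof -
  define G where "G x = \<Phi> (arccos (x / 2))" for x
  have "(h has_integral (G 2 - G (-2))) {-2..2}"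
  proof (rule fundamental_theorem_of_calculus_interior)
    show "continuous_on {-2..2} G" unfolding G_def
      by (rule continuous_on_compose2[OF cont]) (auto intro!: continuous_intros arccos_lbound arccos_ubound)
    fix x :: real assume x: "x \<in> {-2<..<2}"
    define t where "t = arccos (x / 2)"
    have t: "t \<in> {0<..<pi}" using arccos_lt_bounded[of "x/2"] x by (auto simp: t_def)
    have d1: "((\<lambda>x. arccos (x / 2)) has_real_derivative inverse (- sqrt (1 - (x/2)\<^sup>2)) * (1/2)) (at x)"
      using x by (auto intro!: DERIV_chain2[OF DERIV_arccos] derivative_eq_intros)
    have d: "(G has_real_derivative \<phi> t * (inverse (- sqrt (1 - (x/2)\<^sup>2)) * (1/2))) (at x)"
      unfolding G_def t_def using DERIV_chain2[OF der[OF t, unfolded t_def] d1] by (simp add: t_def)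
    have s: "sqrt (4 - x\<^sup>2) = 2 * sqrt (1 - (x/2)\<^sup>2)"
    proof -
      have "sqrt (4 - x\<^sup>2) = sqrt (2\<^sup>2 * (1 - (x/2)\<^sup>2))"
        by (rule arg_cong[where f=sqrt]) (simp add: field_simps power2_eq_square)
      also have "\<dots> = 2 * sqrt (1 - (x/2)\<^sup>2)" by (simp only: real_sqrt_mult real_sqrt_abs)
      finally show ?thesis .
    qed
    have "(2 - x) * (2 + x) > 0" using x by (intro mult_pos_pos) auto
    then have pos: "sqrt (1 - (x/2)\<^sup>2) > 0" by (auto simp: power2_eq_square algebra_simps intro!: real_sqrt_gt_zero)
    have "h x = \<phi> t * (inverse (- sqrt (1 - (x/2)\<^sup>2)) * (1/2))"
      using eq[OF x] pos unfolding s t_def by (simp add: field_simps)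
    then show "(G has_vector_derivative h x) (at x)"
      using d by (simp add: has_real_derivative_iff_has_vector_derivative)
  qed auto
  then show ?thesis by (simp add: G_def)
qed



lemma arccos_facts:
  fixes x :: real
  assumes x: "x \<in> {-2<..<2}"
  defines "t \<equiv> arccos (x / 2)"
  shows "x = 2 * cos t" "sin t > 0" "sqrt (4 - x\<^sup>2) = 2 * sin t" "4 - x\<^sup>2 = 4 * (sin t)\<^sup>2" "t \<in> {0<..<pi}"
proof -
  show c: "x = 2 * cos t" using x by (simp add: t_def)
  show t: "t \<in> {0<..<pi}" using arccos_lt_bounded[of "x/2"] x by (auto simp: t_def)
  then show s: "sin t > 0" by (auto intro: sin_gt_zero)
  show e: "4 - x\<^sup>2 = 4 * (sin t)\<^sup>2" unfolding c by (simp add: sin_squared_eq power_mult_distrib algebra_simps)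
  have "4 * (sin t)\<^sup>2 = (2 * sin t)\<^sup>2" by (simp add: power_mult_distrib)
  then have "sqrt (4 - x\<^sup>2) = \<bar>2 * sin t\<bar>" unfolding e by (simp only: real_sqrt_abs)
  then show "sqrt (4 - x\<^sup>2) = 2 * sin t" using s by simp
qed

lemma sin_lin_deriv: "a \<noteq> 0 \<Longrightarrow> ((\<lambda>t. 2 * sin (a * t) / a) has_real_derivative 2 * cos (a * t)) (at t)"
  by (auto intro!: derivative_eq_intros simp: field_simps)

lemma I1: "((\<lambda>x. cheb_u n x * sqrt (4 - x\<^sup>2)) has_integral (if n = 0 then 2 * pi else 0)) {-2..2}"
proof -
  define \<Phi> where "\<Phi> t = 2 * sin ((real n + 2) * t) / (real n + 2) - (if n = 0 then 2 * t else 2 * sin (real n * t) / real n)" for t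
  define \<phi> where "\<phi> t = 2 * cos ((real n + 2) * t) - 2 * cos (real n * t)" for t
  have "((\<lambda>x. cheb_u n x * sqrt (4 - x\<^sup>2)) has_integral (\<Phi> 0 - \<Phi> pi)) {-2..2}"
  proof (rule subst_FTC)
    show "continuous_on {0..pi} \<Phi>" unfolding \<Phi>_def by (cases "n = 0") (auto intro!: continuous_intros)
    fix t :: real assume "t \<in> {0<..<pi}"
    show "(\<Phi> has_real_derivative \<phi> t) (at t)"
    proof (cases "n = 0")
      case True
      have "((\<lambda>t. 2 * sin ((real n + 2) * t) / (real n + 2) - 2 * t) has_real_derivative 2 * cos ((real n + 2) * t) - 2) (at t)"
        by (rule DERIV_diff[OF sin_lin_deriv]) (auto intro!: derivative_eq_intros)
      then show ?thesis using True unfolding \<Phi>_def \<phi>_def by simp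
    next
      case False
      have "((\<lambda>t. 2 * sin ((real n + 2) * t) / (real n + 2) - 2 * sin (real n * t) / real n) has_real_derivative 2 * cos ((real n + 2) * t) - 2 * cos (real n * t)) (at t)"
        by (rule DERIV_diff[OF sin_lin_deriv sin_lin_deriv]) (use False in auto)
      then show ?thesis using False unfolding \<Phi>_def \<phi>_def by simp
    qed
  next
    fix x :: real assume x: "x \<in> {-2<..<2}"
    define t where "t = arccos (x / 2)"
    note f = arccos_facts[OF x, folded t_def]
    have "cheb_u n x * sqrt (4 - x\<^sup>2) * sqrt (4 - x\<^sup>2) = 4 * (cheb_u n (2 * cos t) * sin t) * sin t"
      using f by (simp add: algebra_simps power2_eq_square)
    also have "\<dots> = 4 * sin ((real n + 1) * t) * sin t" by (simp add: cheb_sin)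
    also have "\<dots> = - \<phi> t"
    proof -
      have "cos (a - t) - cos (a + t) = 2 * sin a * sin t" for a by (simp add: cos_add cos_diff)
      from this[of "(real n + 1) * t"] show ?thesis unfolding \<phi>_def by (simp add: algebra_simps)
    qed
    finally show "cheb_u n x * sqrt (4 - x\<^sup>2) * sqrt (4 - x\<^sup>2) = - \<phi> (arccos (x / 2))"
      by (simp add: t_def)
  qed
  moreover have "\<Phi> 0 - \<Phi> pi = (if n = 0 then 2 * pi else 0)"
  proof -
    have "sin ((real n + 2) * pi) = 0" "sin (real n * pi) = 0"
      using sin_npi[of "n + 2"] sin_npi[of n] by (simp_all add: algebra_simps)
    then show ?thesis unfolding \<Phi>_def by simp
  qed
  ultimately show ?thesis by simp
qed

lemma I2: "((\<lambda>x. 1 / sqrt (4 - x\<^sup>2)) has_integral pi) {-2..2}"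
proof -
  have "((\<lambda>x. 1 / sqrt (4 - x\<^sup>2)) has_integral ((\<lambda>t. - t) 0 - (\<lambda>t. - t) pi)) {-2..2}"
  proof (rule subst_FTC[where \<phi> = "\<lambda>t. -1"])
    fix x :: real assume x: "x \<in> {-2<..<2}"
    show "1 / sqrt (4 - x\<^sup>2) * sqrt (4 - x\<^sup>2) = - (- 1)"
      using arccos_facts(2,3)[OF x] by simp
  qed (auto intro!: derivative_eq_intros continuous_intros)
  then show ?thesis by simp
qed

lemma I3: "((\<lambda>x. sqrt (4 - x\<^sup>2) / (2 * pi * (2 - x))) has_integral 1) {-2..2}"
proof -
  have "((\<lambda>x. sqrt (4 - x\<^sup>2) / (2 * pi * (2 - x))) has_integral
     ((\<lambda>t. - (t + sin t) / pi) 0 - (\<lambda>t. - (t + sin t) / pi) pi)) {-2..2}"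
  proof (rule subst_FTC[where \<phi> = "\<lambda>t. - (1 + cos t) / pi"])
    fix x :: real assume x: "x \<in> {-2<..<2}"
    have "(2 - x) * (2 + x) > 0" using x by (intro mult_pos_pos) auto
    moreover have e4: "4 - x\<^sup>2 = (2 - x) * (2 + x)" by (simp add: power2_eq_square algebra_simps)
    ultimately have p: "4 - x\<^sup>2 > 0" by simp
    have "sqrt (4 - x\<^sup>2) * sqrt (4 - x\<^sup>2) = 4 - x\<^sup>2" using p by simp
    then have ss: "sqrt (4 - x\<^sup>2) * sqrt (4 - x\<^sup>2) = (2 - x) * (2 + x)" using e4 by simp
    have nz: "2 - x \<noteq> 0" using x by auto
    have "sqrt (4 - x\<^sup>2) / (2 * pi * (2 - x)) * sqrt (4 - x\<^sup>2) = (sqrt (4 - x\<^sup>2) * sqrt (4 - x\<^sup>2)) / (2 * pi * (2 - x))"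
      by (rule times_divide_eq_left)
    also have "\<dots> = ((2 - x) * (2 + x)) / (2 * pi * (2 - x))" by (simp only: ss)
    also have "\<dots> = (2 + x) / (2 * pi)" using nz by simp
    also have "\<dots> = - (- (1 + cos (arccos (x / 2))) / pi)"
      using x by (simp add: field_simps)
    finally show "sqrt (4 - x\<^sup>2) / (2 * pi * (2 - x)) * sqrt (4 - x\<^sup>2) = - (- (1 + cos (arccos (x / 2))) / pi)" .
  qed (auto intro!: derivative_eq_intros continuous_intros simp: field_simps)
  then show ?thesis by simp
qed



definition qf :: "real \<Rightarrow> real \<Rightarrow> real" where "qf \<rho> x = 1 - \<rho> * x + \<rho>\<^sup>2"

lemma qf_ge: "qf \<rho> x \<ge> (4 - x\<^sup>2) / 4"
proof -
  have "qf \<rho> x - (4 - x\<^sup>2) / 4 = (\<rho> - x / 2)\<^sup>2" by (simp add: qf_def power2_eq_square field_simps)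
  then show ?thesis by (metis diff_ge_0_iff_ge zero_le_power2)
qed

lemma sq_pos: "x \<in> {-2<..<2} \<Longrightarrow> 4 - x\<^sup>2 > (0::real)"
proof -
  assume x: "x \<in> {-2<..<2}"
  have "(2 - x) * (2 + x) > 0" using x by (intro mult_pos_pos) auto
  moreover have "4 - x\<^sup>2 = (2 - x) * (2 + x)" by (simp add: power2_eq_square algebra_simps)
  ultimately show ?thesis by simp
qed

lemma qf_pos: assumes "x \<in> {-2<..<2}" shows "qf \<rho> x > 0"
proof -
  have "(4 - x\<^sup>2) / 4 > 0" using sq_pos[OF assms] by simp
  then show ?thesis using qf_ge[where \<rho>=\<rho> and x=x] by linarith
qed

lemma dens_meas[measurable]: "mu_density \<rho> \<in> borel_measurable borel"
  unfolding mu_density_def by measurable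

lemma dens_in: "x \<in> {-2<..<2} \<Longrightarrow> mu_density \<rho> x = sqrt (4 - x\<^sup>2) / (2 * pi * qf \<rho> x)"
  by (simp add: mu_density_def qf_def)

lemma dens_out: "x \<notin> {-2<..<2} \<Longrightarrow> mu_density \<rho> x = 0"
  unfolding mu_density_def indicator_def by simp

lemma dens_nonneg: "mu_density \<rho> x \<ge> 0"
proof (cases "x \<in> {-2<..<2}")
  case True
  have "0 < 2 * pi * qf \<rho> x" using qf_pos[OF True, of \<rho>] by simp
  moreover have "0 \<le> sqrt (4 - x\<^sup>2)" using sq_pos[OF True] by simp
  ultimately show ?thesis unfolding dens_in[OF True] by (intro divide_nonneg_pos)
qed (simp add: dens_out)

lemma dens_bound: "mu_density \<rho> x \<le> indicator {-2<..<2} x * (2 / pi * (1 / sqrt (4 - x\<^sup>2)))"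
proof (cases "x \<in> {-2<..<2}")
  case True
  have p: "4 - x\<^sup>2 > 0" using sq_pos[OF True] .
  then have sp: "sqrt (4 - x\<^sup>2) > 0" by simp
  have ss: "sqrt (4 - x\<^sup>2) * sqrt (4 - x\<^sup>2) = 4 - x\<^sup>2" using p by simp
  have "mu_density \<rho> x = sqrt (4 - x\<^sup>2) / (2 * pi * qf \<rho> x)" using dens_in[OF True] .
  also have "\<dots> \<le> sqrt (4 - x\<^sup>2) / (2 * pi * ((4 - x\<^sup>2) / 4))"
  proof (rule divide_left_mono)
    show "2 * pi * ((4 - x\<^sup>2) / 4) \<le> 2 * pi * qf \<rho> x"
      using qf_ge[where \<rho>=\<rho> and x=x] by (intro mult_left_mono) auto
    show "0 \<le> sqrt (4 - x\<^sup>2)" using sp by simp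
    have "0 < 2 * pi * ((4 - x\<^sup>2) / 4)" using p by simp
    moreover have "0 < 2 * pi * qf \<rho> x" using qf_pos[OF True] by simp
    ultimately show "0 < 2 * pi * qf \<rho> x * (2 * pi * ((4 - x\<^sup>2) / 4))" by (rule mult_pos_pos[rotated])
  qed
  also have "\<dots> = sqrt (4 - x\<^sup>2) / (2 * pi * ((sqrt (4 - x\<^sup>2) * sqrt (4 - x\<^sup>2)) / 4))"
    by (simp only: ss)
  also have "\<dots> = 2 / pi * (1 / sqrt (4 - x\<^sup>2))"
  proof -
    have "w / (2 * pi * ((w * w) / 4)) = 2 / pi * (1 / w)" if "w > 0" for w :: real
      using that by (simp add: field_simps)
    from this[OF sp] show ?thesis .
  qed
  finally show ?thesis using True by simp
qed (simp add: dens_out)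

lemma restrict_ind: "(\<lambda>x::real. if x \<in> {-2<..<2} then h x else 0) = (\<lambda>x. indicator {-2<..<2} x * h x :: real)"
  by (auto simp: fun_eq_iff indicator_def)

lemma hk_ind:
  fixes h :: "real \<Rightarrow> real"
  assumes "(h has_integral I) {-2..2}"
  shows "((\<lambda>x. indicator {-2<..<2} x * h x :: real) has_integral I) UNIV"
proof -
  have "(h has_integral I) {-2<..<2}" using assms by (simp add: has_integral_Icc_iff_Ioo)
  then have "((\<lambda>x. if x \<in> {-2<..<2} then h x else 0) has_integral I) UNIV"
    by (subst has_integral_restrict_UNIV)
  then show ?thesis by (simp only: restrict_ind)
qed

lemma hk_leb:
  fixes h :: "real \<Rightarrow> real"
  assumes "(h has_integral I) {-2..2}" "integrable lborel (\<lambda>x. indicator {-2<..<2} x * h x :: real)"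
  shows "(LINT x|lborel. indicator {-2<..<2} x * h x) = I"
  using has_integral_unique[OF has_integral_integral_real[OF assms(2)] hk_ind[OF assms(1)]] .



lemma bnd_nonneg: "0 \<le> (indicator {-2<..<2} x * (1 / sqrt (4 - x\<^sup>2)) :: real)"
proof (cases "x \<in> {-2<..<2}")
  case True then show ?thesis using sq_pos[OF True] by simp
qed simp

lemma bnd_int: "integrable lborel (\<lambda>x. indicator {-2<..<2} x * (1 / sqrt (4 - x\<^sup>2)) :: real)"
proof (rule integrableI_nn_integral_finite)
  show "(\<lambda>x. indicator {-2<..<2} x * (1 / sqrt (4 - x\<^sup>2)) :: real) \<in> borel_measurable lborel" by measurable
  show "AE x in lborel. 0 \<le> (indicator {-2<..<2} x * (1 / sqrt (4 - x\<^sup>2)) :: real)"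
  proof (rule AE_I2)
    fix x :: real
    show "0 \<le> (indicator {-2<..<2} x * (1 / sqrt (4 - x\<^sup>2)) :: real)"
    proof (cases "x \<in> {-2<..<2}")
      case True then show ?thesis using sq_pos[OF True] by simp
    qed simp
  qed
  show "(\<integral>\<^sup>+x. ennreal (indicator {-2<..<2} x * (1 / sqrt (4 - x\<^sup>2))) \<partial>lborel) = ennreal pi"
    by (rule nn_integral_has_integral_lborel[OF _ bnd_nonneg hk_ind[OF I2]]) auto
qed

lemma ind_int:
  fixes g :: "real \<Rightarrow> real"
  assumes "continuous_on UNIV g"
  shows "integrable lborel (\<lambda>x. indicator {-2<..<2} x * g x :: real)"
proof -
  have "compact (g ` {-2..(2::real)})" by (intro compact_continuous_image continuous_on_subset[OF assms]) auto
  then obtain B where B: "\<And>x. x \<in> {-2..2} \<Longrightarrow> norm (g x) \<le> B"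
    using compact_imp_bounded bounded_iff by (metis imageI)
  have gm: "g \<in> borel_measurable borel" using assms by (rule borel_measurable_continuous_onI)
  show ?thesis
  proof (rule Bochner_Integration.integrable_bound[where f = "\<lambda>x::real. B * indicator {-2<..<2} x :: real"])
    show "integrable lborel (\<lambda>x::real. B * indicator {-2<..<2} x :: real)" by (intro integrable_mult_right) auto
    show "(\<lambda>x. indicator {-2<..<2} x * g x :: real) \<in> borel_measurable lborel" using gm by measurable
    show "AE x in lborel. norm (indicator {-2<..<2} x * g x :: real) \<le> norm (B * indicator {-2<..<2} x :: real)"
    proof (rule AE_I2)
      fix x :: real
      have "B \<ge> 0" using B[of 0] by simp
      then show "norm (indicator {-2<..<2} x * g x :: real) \<le> norm (B * indicator {-2<..<2} x :: real)"
        using B[of x] by (cases "x \<in> {-2<..<2}") (auto simp: abs_mult)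
    qed
  qed
qed

lemma dens_int:
  fixes g :: "real \<Rightarrow> real"
  assumes "continuous_on UNIV g"
  shows "integrable lborel (\<lambda>x. mu_density \<rho> x * g x)"
proof -
  have "compact (g ` {-2..(2::real)})" by (intro compact_continuous_image continuous_on_subset[OF assms]) auto
  then obtain B where B: "\<And>x. x \<in> {-2..2} \<Longrightarrow> norm (g x) \<le> B"
    using compact_imp_bounded bounded_iff by (metis imageI)
  have gm: "g \<in> borel_measurable borel" using assms by (rule borel_measurable_continuous_onI)
  show ?thesis
  proof (rule Bochner_Integration.integrable_bound[where f = "\<lambda>x::real. B * (2 / pi) * (indicator {-2<..<2} x * (1 / sqrt (4 - x\<^sup>2))) :: real"])
    show "integrable lborel (\<lambda>x. B * (2 / pi) * (indicator {-2<..<2} x * (1 / sqrt (4 - x\<^sup>2))) :: real)"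
      by (intro integrable_mult_right bnd_int)
    show "(\<lambda>x. mu_density \<rho> x * g x) \<in> borel_measurable lborel" using gm by measurable
    show "AE x in lborel. norm (mu_density \<rho> x * g x) \<le> norm (B * (2 / pi) * (indicator {-2<..<2} x * (1 / sqrt (4 - x\<^sup>2))) :: real)"
    proof (rule AE_I2)
      fix x :: real
      show "norm (mu_density \<rho> x * g x) \<le> norm (B * (2 / pi) * (indicator {-2<..<2} x * (1 / sqrt (4 - x\<^sup>2))) :: real)"
      proof (cases "x \<in> {-2<..<2}")
        case True
        have B0: "B \<ge> 0" using B[of 0] by simp
        have "norm (mu_density \<rho> x * g x) = mu_density \<rho> x * \<bar>g x\<bar>" using dens_nonneg[of \<rho> x] by (simp add: abs_mult)
        also have "\<dots> \<le> (2 / pi * (1 / sqrt (4 - x\<^sup>2))) * B"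
          using dens_bound[of \<rho> x] True B[of x] dens_nonneg[of \<rho> x] sq_pos[OF True]
          by (intro mult_mono) auto
        also have "\<dots> \<le> norm (B * (2 / pi) * (indicator {-2<..<2} x * (1 / sqrt (4 - x\<^sup>2))) :: real)"
          using True B0 sq_pos[OF True] by (simp add: abs_mult abs_of_nonneg mult.commute)
        finally show ?thesis .
      qed (simp add: dens_out)
    qed
  qed
qed



definition D :: "real \<Rightarrow> nat \<Rightarrow> real" where
  "D \<rho> n = (LINT x|lborel. mu_density \<rho> x * cheb_u n x)"

lemma cheb_contU: "continuous_on UNIV (cheb_u n)" by (rule cheb_cont)

lemma D_rec:
  "(1 + \<rho>\<^sup>2) * D \<rho> n - \<rho> * D \<rho> (Suc n) - \<rho> * (if n = 0 then 0 else D \<rho> (n - 1)) = (if n = 0 then 1 else 0)"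
proof -
  define pv where "pv x = (if n = 0 then 0 else cheb_u (n - 1) x)" for x
  have pvc: "continuous_on UNIV pv"
    by (cases "n = 0") (simp_all add: pv_def cheb_contU)
  have i1: "integrable lborel (\<lambda>x. mu_density \<rho> x * cheb_u n x)" by (rule dens_int[OF cheb_contU])
  have i2: "integrable lborel (\<lambda>x. mu_density \<rho> x * cheb_u (Suc n) x)" by (rule dens_int[OF cheb_contU])
  have i3: "integrable lborel (\<lambda>x. mu_density \<rho> x * pv x)" by (rule dens_int[OF pvc])
  have pvD: "(LINT x|lborel. mu_density \<rho> x * pv x) = (if n = 0 then 0 else D \<rho> (n - 1))"
    by (cases "n = 0") (simp_all add: pv_def D_def)
  have "(1 + \<rho>\<^sup>2) * D \<rho> n - \<rho> * D \<rho> (Suc n) - \<rho> * (if n = 0 then 0 else D \<rho> (n - 1))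
     = (LINT x|lborel. (1 + \<rho>\<^sup>2) * (mu_density \<rho> x * cheb_u n x) - \<rho> * (mu_density \<rho> x * cheb_u (Suc n) x)
            - \<rho> * (mu_density \<rho> x * pv x))"
    using i1 i2 i3 by (simp add: D_def pvD[symmetric])
  also have "\<dots> = (LINT x|lborel. (1 / (2 * pi)) * (indicator {-2<..<2} x * (cheb_u n x * sqrt (4 - x\<^sup>2))))"
  proof (rule Bochner_Integration.integral_cong[OF refl])
    fix x :: real
    have rec: "x * cheb_u n x = cheb_u (Suc n) x + pv x" using cheb_rec[of x n] by (simp add: pv_def)
    have "(1 + \<rho>\<^sup>2) * (mu_density \<rho> x * cheb_u n x) - \<rho> * (mu_density \<rho> x * cheb_u (Suc n) x)
            - \<rho> * (mu_density \<rho> x * pv x) = mu_density \<rho> x * ((1 + \<rho>\<^sup>2) * cheb_u n x - \<rho> * (x * cheb_u n x))"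
      unfolding rec by (simp add: algebra_simps)
    also have "\<dots> = mu_density \<rho> x * qf \<rho> x * cheb_u n x" by (simp add: qf_def algebra_simps)
    also have "\<dots> = (1 / (2 * pi)) * (indicator {-2<..<2} x * (cheb_u n x * sqrt (4 - x\<^sup>2)))"
    proof (cases "x \<in> {-2<..<2}")
      case True
      have "qf \<rho> x > 0" using qf_pos[OF True] .
      then show ?thesis using True by (simp add: dens_in)
    qed (simp add: dens_out)
    finally show "(1 + \<rho>\<^sup>2) * (mu_density \<rho> x * cheb_u n x) - \<rho> * (mu_density \<rho> x * cheb_u (Suc n) x)
            - \<rho> * (mu_density \<rho> x * pv x) = (1 / (2 * pi)) * (indicator {-2<..<2} x * (cheb_u n x * sqrt (4 - x\<^sup>2)))" .
  qed
  also have "\<dots> = (1 / (2 * pi)) * (LINT x|lborel. indicator {-2<..<2} x * (cheb_u n x * sqrt (4 - x\<^sup>2)))"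
    by (rule integral_mult_right_zero)
  also have "(LINT x|lborel. indicator {-2<..<2} x * (cheb_u n x * sqrt (4 - x\<^sup>2))) = (if n = 0 then 2 * pi else 0)"
    by (rule hk_leb[OF I1 ind_int]) (auto intro!: continuous_intros cheb_contU)
  finally show ?thesis by simp
qed

lemma D_bound:
  assumes r: "\<rho> > 0" "\<rho> \<noteq> 1"
  shows "\<exists>K. \<forall>n. \<bar>D \<rho> n\<bar> \<le> K"
proof -
  define K where "K = 1 / (pi * (1 - \<rho>)\<^sup>2)"
  have rp: "(1 - \<rho>)\<^sup>2 > 0" using r by simp
  have "\<bar>D \<rho> n\<bar> \<le> (LINT x|lborel. indicator {-2<..<2} (x::real) * K)" for n
    unfolding D_def
  proof (rule integral_abs_bound_integral)
    show "integrable lborel (\<lambda>x. mu_density \<rho> x * cheb_u n x)" by (rule dens_int[OF cheb_contU])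
    show "integrable lborel (\<lambda>x::real. indicator {-2<..<2} x * K :: real)" by (rule ind_int) simp
    fix x :: real
    show "\<bar>mu_density \<rho> x * cheb_u n x\<bar> \<le> indicator {-2<..<2} x * K"
    proof (cases "x \<in> {-2<..<2}")
      case True
      define t where "t = arccos (x / 2)"
      note f = arccos_facts[OF True, folded t_def]
      have "cheb_u n x * sqrt (4 - x\<^sup>2) = 2 * (cheb_u n (2 * cos t) * sin t)"
        using f by (simp add: algebra_simps)
      also have "\<dots> = 2 * sin ((real n + 1) * t)" by (simp add: cheb_sin)
      finally have b2: "\<bar>cheb_u n x * sqrt (4 - x\<^sup>2)\<bar> \<le> 2" by (simp add: abs_mult)
      have qge: "qf \<rho> x \<ge> (1 - \<rho>)\<^sup>2"
      proof -
        have "qf \<rho> x - (1 - \<rho>)\<^sup>2 = \<rho> * (2 - x)" by (simp add: qf_def power2_eq_square algebra_simps)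
        moreover have "\<rho> * (2 - x) \<ge> 0" using r True by simp
        ultimately show ?thesis by simp
      qed
      have "\<bar>mu_density \<rho> x * cheb_u n x\<bar> = \<bar>cheb_u n x * sqrt (4 - x\<^sup>2)\<bar> / (2 * pi * qf \<rho> x)"
        using qf_pos[OF True, of \<rho>] by (simp add: dens_in[OF True] abs_mult abs_divide)
      also have "\<dots> \<le> 2 / (2 * pi * (1 - \<rho>)\<^sup>2)"
        using b2 qge rp by (intro frac_le mult_left_mono mult_pos_pos) auto
      also have "\<dots> = indicator {-2<..<2} x * K" using True by (simp add: K_def)
      finally show ?thesis .
    qed (simp add: dens_out)
  qed
  then show ?thesis by blast
qed

lemma D0_1: "D 1 0 = 1"
proof -
  have "D 1 0 = (LINT x|lborel. indicator {-2<..<2} x * (sqrt (4 - x\<^sup>2) / (2 * pi * (2 - x))))"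
    unfolding D_def
  proof (rule Bochner_Integration.integral_cong[OF refl])
    fix x :: real
    show "mu_density 1 x * cheb_u 0 x = indicator {-2<..<2} x * (sqrt (4 - x\<^sup>2) / (2 * pi * (2 - x)))"
      by (cases "x \<in> {-2<..<2}") (simp_all add: dens_in dens_out qf_def)
  qed
  also have "\<dots> = 1"
  proof (rule hk_leb[OF I3])
    have "integrable lborel (\<lambda>x. mu_density 1 x * 1)" by (rule dens_int) simp
    moreover have "mu_density 1 x * 1 = indicator {-2<..<2} x * (sqrt (4 - x\<^sup>2) / (2 * pi * (2 - x)))" for x
      by (cases "x \<in> {-2<..<2}") (simp_all add: dens_in dens_out qf_def)
    ultimately show "integrable lborel (\<lambda>x. indicator {-2<..<2} x * (sqrt (4 - x\<^sup>2) / (2 * pi * (2 - x))))"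
      by simp
  qed
  finally show ?thesis .
qed



lemma seq_unique:
  fixes E :: "nat \<Rightarrow> real"
  assumes r: "\<rho> > 0"
    and R: "\<And>n. (1 + \<rho>\<^sup>2) * E n - \<rho> * E (Suc n) - \<rho> * (if n = 0 then 0 else E (n - 1)) = 0"
  shows "E n = E 0 * cheb_u n (\<rho> + 1 / \<rho>)"
proof -
  define y where "y = \<rho> + 1 / \<rho>"
  have step: "E (Suc n) = y * E n - (if n = 0 then 0 else E (n - 1))" for n
  proof -
    have "\<rho> * E (Suc n) = (1 + \<rho>\<^sup>2) * E n - \<rho> * (if n = 0 then 0 else E (n - 1))" using R[of n] by simp
    then have "E (Suc n) = ((1 + \<rho>\<^sup>2) * E n - \<rho> * (if n = 0 then 0 else E (n - 1))) / \<rho>"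
      using r by (simp add: field_simps)
    also have "\<dots> = y * E n - (if n = 0 then 0 else E (n - 1))"
      using r by (simp add: y_def field_simps power2_eq_square)
    finally show ?thesis .
  qed
  have "E n = E 0 * cheb_u n y \<and> E (Suc n) = E 0 * cheb_u (Suc n) y"
  proof (induction n)
    case 0 then show ?case using step[of 0] by simp
  next
    case (Suc n)
    then show ?case using step[of "Suc n"] by (simp add: algebra_simps)
  qed
  then show ?thesis by (simp add: y_def)
qed

lemma y_ge2: "(\<rho>::real) > 0 \<Longrightarrow> \<rho> + 1 / \<rho> \<ge> 2"
proof -
  assume r: "\<rho> > 0"
  have "(\<rho> - 1)\<^sup>2 \<ge> 0" by simp
  then have "\<rho> * \<rho> + 1 \<ge> 2 * \<rho>" by (simp add: power2_eq_square algebra_simps)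
  then show ?thesis using r by (simp add: field_simps)
qed

definition Tv :: "real \<Rightarrow> nat \<Rightarrow> real" where
  "Tv \<rho> n = (if \<rho> \<le> 1 then \<rho> ^ n else (1 / \<rho>) ^ (n + 2))"

lemma Tv_rec:
  assumes r: "\<rho> > 0"
  shows "(1 + \<rho>\<^sup>2) * Tv \<rho> n - \<rho> * Tv \<rho> (Suc n) - \<rho> * (if n = 0 then 0 else Tv \<rho> (n - 1)) = (if n = 0 then 1 else 0)"
proof (cases "\<rho> \<le> 1")
  case True
  then show ?thesis
    by (cases n) (simp_all add: Tv_def power2_eq_square algebra_simps)
next
  case False
  then show ?thesis using r
    by (cases n) (simp_all add: Tv_def power2_eq_square field_simps)
qed

lemma Tv_bound: "\<rho> > 0 \<Longrightarrow> \<bar>Tv \<rho> n\<bar> \<le> 1"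
proof -
  assume r: "\<rho> > 0"
  show ?thesis
  proof (cases "\<rho> \<le> 1")
    case True
    then have "\<rho> ^ n \<le> 1" using r by (intro power_le_one) auto
    then show ?thesis using True r by (simp add: Tv_def)
  next
    case False
    have "0 \<le> 1 / \<rho>" "1 / \<rho> \<le> 1" using False by auto
    then have "(1 / \<rho>) ^ (n + 2) \<le> 1" by (rule power_le_one)
    moreover have "(1 / \<rho>) ^ (n + 2) \<ge> 0" using r by simp
    ultimately show ?thesis using False by (simp only: Tv_def if_False)
  qed
qed

lemma D_val:
  assumes r: "\<rho> > 0"
  shows "D \<rho> n = Tv \<rho> n"
proof -
  define E where "E n = D \<rho> n - Tv \<rho> n" for n
  have R: "(1 + \<rho>\<^sup>2) * E n - \<rho> * E (Suc n) - \<rho> * (if n = 0 then 0 else E (n - 1)) = 0" for n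
    using D_rec[of \<rho> n] Tv_rec[OF r, of n] unfolding E_def by (cases "n = 0") (simp_all add: algebra_simps)
  have Eeq: "E n = E 0 * cheb_u n (\<rho> + 1 / \<rho>)" for n by (rule seq_unique[OF r R])
  have E0: "E 0 = 0"
  proof (cases "\<rho> = 1")
    case True
    then show ?thesis by (simp add: E_def D0_1 Tv_def)
  next
    case False
    obtain K where K: "\<And>n. \<bar>D \<rho> n\<bar> \<le> K" using D_bound[OF r False] by blast
    have bnd: "\<bar>E 0\<bar> * (real n + 1) \<le> K + 1" for n
    proof -
      have "\<bar>E 0\<bar> * (real n + 1) \<le> \<bar>E 0\<bar> * cheb_u n (\<rho> + 1 / \<rho>)"
        using cheb_ge[OF y_ge2[OF r], of n] by (intro mult_left_mono) auto
      also have "\<dots> = \<bar>E n\<bar>" using Eeq[of n] cheb_ge[OF y_ge2[OF r], of n] by (simp add: abs_mult)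
      also have "\<dots> \<le> K + 1" using K[of n] Tv_bound[OF r, of n] unfolding E_def by linarith
      finally show ?thesis .
    qed
    show ?thesis
    proof (rule ccontr)
      assume ne: "E 0 \<noteq> 0"
      obtain n :: nat where n: "real n > (K + 1) / \<bar>E 0\<bar>" using reals_Archimedean2 by blast
      then have "real n * \<bar>E 0\<bar> > K + 1" using ne by (simp add: field_simps)
      moreover have "\<bar>E 0\<bar> * (real n + 1) \<ge> real n * \<bar>E 0\<bar>" by (simp add: algebra_simps)
      ultimately show False using bnd[of n] by linarith
    qed
  qed
  show ?thesis using Eeq[of n] E0 unfolding E_def by simp
qed

lemma Dm_integral:
  fixes g :: "real \<Rightarrow> real"
  assumes "continuous_on UNIV g"
  shows "integrable (Dm \<rho>) g" "integral\<^sup>L (Dm \<rho>) g = (LINT x|lborel. mu_density \<rho> x * g x)"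
proof -
  have gm: "g \<in> borel_measurable borel" using assms by (rule borel_measurable_continuous_onI)
  have nn: "AE x in lborel. 0 \<le> mu_density \<rho> x" by (simp add: dens_nonneg)
  show "integrable (Dm \<rho>) g" unfolding Dm_def
    using integrable_density[of g lborel "mu_density \<rho>"] gm nn dens_int[OF assms, of \<rho>] by simp
  show "integral\<^sup>L (Dm \<rho>) g = (LINT x|lborel. mu_density \<rho> x * g x)" unfolding Dm_def
    using integral_density[of g lborel "mu_density \<rho>"] gm nn by simp
qed

lemma mu_int:
  fixes g :: "real \<Rightarrow> real"
  assumes "continuous_on UNIV g"
  shows "integrable (mu \<rho>) g"
    "integral\<^sup>L (mu \<rho>) g = (LINT x|lborel. mu_density \<rho> x * g x) + max 0 (1 - 1 / \<rho>\<^sup>2) * g (\<rho> + 1 / \<rho>)"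
proof -
  have gm: "g \<in> borel_measurable borel" using assms by (rule borel_measurable_continuous_onI)
  show "integrable (mu \<rho>) g" using integral_mu(1)[OF gm Dm_integral(1)[OF assms]] .
  show "integral\<^sup>L (mu \<rho>) g = (LINT x|lborel. mu_density \<rho> x * g x) + max 0 (1 - 1 / \<rho>\<^sup>2) * g (\<rho> + 1 / \<rho>)"
    using integral_mu(2)[OF gm Dm_integral(1)[OF assms]] Dm_integral(2)[OF assms] by simp
qed

lemma J_val:
  assumes r: "\<rho> > 0"
  shows "integral\<^sup>L (mu \<rho>) (cheb_u n) = \<rho> ^ n"
proof -
  have "integral\<^sup>L (mu \<rho>) (cheb_u n) = D \<rho> n + max 0 (1 - 1 / \<rho>\<^sup>2) * cheb_u n (\<rho> + 1 / \<rho>)"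
    using mu_int(2)[OF cheb_contU] by (simp add: D_def)
  also have "\<dots> = \<rho> ^ n"
  proof (cases "\<rho> \<le> 1")
    case True
    have "1 / \<rho>\<^sup>2 \<ge> 1" using True r by (simp add: field_simps power_le_one)
    then have "max 0 (1 - 1 / \<rho>\<^sup>2) = 0" by simp
    then show ?thesis using True D_val[OF r, of n] by (simp add: Tv_def)
  next
    case False
    have c: "max 0 (1 - 1 / \<rho>\<^sup>2) = (\<rho> - 1 / \<rho>) / \<rho>"
    proof -
      have "1 / \<rho>\<^sup>2 \<le> 1" using False by (simp add: field_simps power_le_one)
      then show ?thesis using r by (simp add: field_simps power2_eq_square)
    qed
    have "max 0 (1 - 1 / \<rho>\<^sup>2) * cheb_u n (\<rho> + 1 / \<rho>) = (\<rho> ^ (n + 1) - (1 / \<rho>) ^ (n + 1)) / \<rho>"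
      unfolding c using cheb_rho[OF r, of n] by simp
    also have "\<dots> = \<rho> ^ n - (1 / \<rho>) ^ (n + 2)"
      using r by (simp add: field_simps power_add)
    finally show ?thesis using False D_val[OF r, of n] by (simp add: Tv_def)
  qed
  finally show ?thesis .
qed



definition F :: "real \<Rightarrow> real \<Rightarrow> nat \<Rightarrow> nat \<Rightarrow> real" where
  "F \<sigma> \<rho> L m = (\<Sum>n. \<rho> ^ n * P \<sigma> L m n)"

lemma F_fin: "K \<ge> m + L \<Longrightarrow> F \<sigma> \<rho> L m = (\<Sum>n\<le>K. \<rho> ^ n * P \<sigma> L m n)"
  unfolding F_def by (rule suminf_finite) (auto simp: P_vanish)

lemma F0: "F \<sigma> \<rho> 0 m = \<rho> ^ m"
proof -
  have "F \<sigma> \<rho> 0 m = (\<Sum>n\<le>m. \<rho> ^ n * P \<sigma> 0 m n)" by (rule F_fin) simp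
  also have "\<dots> = (\<Sum>n\<le>m. if n = m then \<rho> ^ m else 0)"
    by (rule sum.cong) (auto simp: P0)
  also have "\<dots> = \<rho> ^ m" by simp
  finally show ?thesis .
qed

lemma FS: "F \<sigma> \<rho> (Suc L) m = \<sigma> * F \<sigma> \<rho> L m + F \<sigma> \<rho> L (m + 1) + (if m = 0 then 0 else F \<sigma> \<rho> L (m - 1))"
proof -
  define K where "K = m + L + 1"
  have "F \<sigma> \<rho> (Suc L) m = (\<Sum>n\<le>K. \<rho> ^ n * P \<sigma> (Suc L) m n)" by (rule F_fin) (simp add: K_def)
  also have "\<dots> = (\<Sum>n\<le>K. \<sigma> * (\<rho> ^ n * P \<sigma> L m n) + \<rho> ^ n * P \<sigma> L (m + 1) n
        + (if m = 0 then 0 else \<rho> ^ n * P \<sigma> L (m - 1) n))"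
    by (rule sum.cong[OF refl]) (simp only: PS Sn_sum, simp add: algebra_simps)
  also have "\<dots> = \<sigma> * (\<Sum>n\<le>K. \<rho> ^ n * P \<sigma> L m n) + (\<Sum>n\<le>K. \<rho> ^ n * P \<sigma> L (m + 1) n)
        + (if m = 0 then 0 else (\<Sum>n\<le>K. \<rho> ^ n * P \<sigma> L (m - 1) n))"
    by (simp add: sum.distrib sum_distrib_left)
  also have "\<dots> = \<sigma> * F \<sigma> \<rho> L m + F \<sigma> \<rho> L (m + 1) + (if m = 0 then 0 else F \<sigma> \<rho> L (m - 1))"
    by (subst (1 2 3) F_fin[where K = K]) (auto simp: K_def)
  finally show ?thesis .
qed

definition G :: "real \<Rightarrow> real \<Rightarrow> nat \<Rightarrow> nat \<Rightarrow> real" where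
  "G \<sigma> \<rho> L m = integral\<^sup>L (mu \<rho>) (\<lambda>x. (x + \<sigma>) ^ L * cheb_u m x)"

lemma G0: "\<rho> > 0 \<Longrightarrow> G \<sigma> \<rho> 0 m = \<rho> ^ m"
  using J_val[of \<rho> m] by (simp add: G_def)

lemma GS: "G \<sigma> \<rho> (Suc L) m = \<sigma> * G \<sigma> \<rho> L m + G \<sigma> \<rho> L (m + 1) + (if m = 0 then 0 else G \<sigma> \<rho> L (m - 1))"
proof -
  define pv where "pv x = (if m = 0 then 0 else cheb_u (m - 1) x)" for x
  have pvc: "continuous_on UNIV pv"
    by (cases "m = 0") (simp_all add: pv_def cheb_contU)
  have c: "continuous_on UNIV (\<lambda>x. (x + \<sigma>) ^ L * h x)" if "continuous_on UNIV h" for h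
    by (intro continuous_intros that)
  have i1: "integrable (mu \<rho>) (\<lambda>x. (x + \<sigma>) ^ L * cheb_u m x)" by (rule mu_int(1)[OF c[OF cheb_contU]])
  have i2: "integrable (mu \<rho>) (\<lambda>x. (x + \<sigma>) ^ L * cheb_u (m + 1) x)" by (rule mu_int(1)[OF c[OF cheb_contU]])
  have i3: "integrable (mu \<rho>) (\<lambda>x. (x + \<sigma>) ^ L * pv x)" by (rule mu_int(1)[OF c[OF pvc]])
  have pvG: "integral\<^sup>L (mu \<rho>) (\<lambda>x. (x + \<sigma>) ^ L * pv x) = (if m = 0 then 0 else G \<sigma> \<rho> L (m - 1))"
    by (cases "m = 0") (simp_all add: pv_def G_def)
  have "G \<sigma> \<rho> (Suc L) m = integral\<^sup>L (mu \<rho>) (\<lambda>x. \<sigma> * ((x + \<sigma>) ^ L * cheb_u m x)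
      + (x + \<sigma>) ^ L * cheb_u (m + 1) x + (x + \<sigma>) ^ L * pv x)"
    unfolding G_def
  proof (rule Bochner_Integration.integral_cong[OF refl])
    fix x :: real
    have rec: "x * cheb_u m x = cheb_u (m + 1) x + pv x" using cheb_rec[of x m] by (simp add: pv_def)
    have e: "(x + \<sigma>) ^ Suc L * cheb_u m x = (x + \<sigma>) ^ L * (\<sigma> * cheb_u m x) + (x + \<sigma>) ^ L * (x * cheb_u m x)"
      by (simp add: algebra_simps)
    show "(x + \<sigma>) ^ Suc L * cheb_u m x = \<sigma> * ((x + \<sigma>) ^ L * cheb_u m x)
      + (x + \<sigma>) ^ L * cheb_u (m + 1) x + (x + \<sigma>) ^ L * pv x"
      unfolding e rec by (simp add: algebra_simps)
  qed
  also have "\<dots> = \<sigma> * G \<sigma> \<rho> L m + G \<sigma> \<rho> L (m + 1) + (if m = 0 then 0 else G \<sigma> \<rho> L (m - 1))"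
    using i1 i2 i3 by (simp add: G_def pvG[symmetric])
  finally show ?thesis .
qed

lemma FG: "\<rho> > 0 \<Longrightarrow> F \<sigma> \<rho> L m = G \<sigma> \<rho> L m"
proof (induction L arbitrary: m)
  case 0 then show ?case by (simp add: F0 G0)
next
  case (Suc L) then show ?case by (simp add: FS GS)
qed

theorem lemma4p1:
  fixes \<sigma> \<rho>1 :: real and L m :: nat
  assumes "\<sigma> > 0" and "\<rho>1 > 0" and "L \<ge> 1"
  shows "(\<Sum>n. \<rho>1 ^ n * (\<Sum>\<gamma>\<in>motzkin_paths L m n. motzkin_weight \<sigma> \<gamma>))
           = (\<integral>x. (x + \<sigma>) ^ L * cheb_u m x \<partial>mu \<rho>1)"
  using FG[OF assms(2), of \<sigma> L m] by (simp add: F_def G_def P_def)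

end
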